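(* For every $m\ge0$, substituting $\lambda_i=q^{-2(i-1)}$, $i=1,\dots,n$, into $\vartheta_m(q^{-2},\lambda)$ gives $\hat n$.
   Context: $\hat m=\frac{1-q^{-2m}}{1-q^{-2}}$. For indeterminates $\lambda=(\lambda_1,\dots,\lambda_n)$ and $m\ge1$, $\vartheta_m(q^{-2},\lambda)=\sum_{\ell=1}^n(1-q^{-2})^{\ell-1}\sum_{\mathbf d}\sum_{1\le j_1<\dots<j_\ell\le n}\lambda_{j_1}^{d_1}\cdots\lambda_{j_\ell}^{d_\ell}$, where $\mathbf d=(d_1,\dots,d_\ell)$ runs over $\ell$-tuples of positive integers with sum $m$; $\vartheta_0(q^{-2},\lambda)=\hat n$. *)

theory Defs
  imports Main
begin

definition qhat :: "'a::field \<Rightarrow> nat \<Rightarrow> 'a" where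
  "qhat q m = (1 - inverse q ^ (2 * m)) / (1 - inverse q ^ 2)"

definition compositions :: "nat \<Rightarrow> nat \<Rightarrow> nat list set" where
  "compositions l m = {d. length d = l \<and> (\<forall>x\<in>set d. 0 < x) \<and> sum_list d = m}"

definition incr_tuples :: "nat \<Rightarrow> nat \<Rightarrow> nat list set" where
  "incr_tuples l n = {js. length js = l \<and> sorted_wrt (<) js \<and> set js \<subseteq> {1..n}}"

text \<open>theta t m n lam = vartheta_m(t, lambda) with lambda = (lam 1, ..., lam n);
  vartheta_0(q^{-2}, lambda) = hat n, i.e. (1 - t^n)/(1 - t) with t = q^{-2}.\<close>
definition theta :: "'a::field \<Rightarrow> nat \<Rightarrow> nat \<Rightarrow> (nat \<Rightarrow> 'a) \<Rightarrow> 'a" where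
  "theta t m n lam =
     (if m = 0 then (1 - t ^ n) / (1 - t)
      else (\<Sum>l = 1..n. (1 - t) ^ (l - 1) *
              (\<Sum>d \<in> compositions l m. \<Sum>js \<in> incr_tuples l n.
                  \<Prod>i<l. lam (js ! i) ^ (d ! i))))"

end

theory Submission
  imports Defs
begin

definition W :: "(nat \<Rightarrow> 'a::field) \<Rightarrow> nat \<Rightarrow> nat \<Rightarrow> nat \<Rightarrow> 'a" where
  "W lam l n m = (\<Sum>d \<in> compositions l m. \<Sum>js \<in> incr_tuples l n.
                  \<Prod>i<l. lam (js ! i) ^ (d ! i))"

lemma fin_incr: "finite (incr_tuples l n)"
proof -
  have "incr_tuples l n \<subseteq> {xs. set xs \<subseteq> {1..n} \<and> length xs = l}"
    unfolding incr_tuples_def by auto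
  thus ?thesis using finite_lists_length_eq[of "{1..n}" l] finite_subset by blast
qed

lemma fin_comp: "finite (compositions l m)"
proof -
  have "compositions l m \<subseteq> {xs. set xs \<subseteq> {0..m} \<and> length xs = l}"
    unfolding compositions_def using member_le_sum_list by fastforce
  thus ?thesis using finite_lists_length_eq[of "{0..m}" l] finite_subset by blast
qed

lemma W0: "W lam 0 n m = (if m = 0 then 1 else 0)"
proof -
  have "compositions 0 m = (if m = 0 then {[]} else {})"
    unfolding compositions_def by auto
  moreover have "incr_tuples 0 n = {[]}" unfolding incr_tuples_def by auto
  ultimately show ?thesis unfolding W_def by simp
qed

lemma W_big: assumes "n < l" shows "W lam l n m = 0"
proof -
  have "incr_tuples l n = {}"
  proof (rule ccontr)
    assume "incr_tuples l n \<noteq> {}"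
    then obtain js where js: "length js = l" "sorted_wrt (<) js" "set js \<subseteq> {1..n}"
      unfolding incr_tuples_def by auto
    have "distinct js" using js(2) strict_sorted_iff by blast
    hence "card (set js) = l" using js(1) distinct_card by blast
    moreover have "card (set js) \<le> n" using card_mono[OF _ js(3)] by simp
    ultimately show False using assms by simp
  qed
  thus ?thesis unfolding W_def by simp
qed

lemma incr_split:
  "incr_tuples (Suc l) (Suc n) = incr_tuples (Suc l) n \<union> (\<lambda>js. js @ [Suc n]) ` incr_tuples l n"
proof
  show "incr_tuples (Suc l) (Suc n) \<subseteq> incr_tuples (Suc l) n \<union> (\<lambda>js. js @ [Suc n]) ` incr_tuples l n"
  proof
    fix js assume js: "js \<in> incr_tuples (Suc l) (Suc n)"
    show "js \<in> incr_tuples (Suc l) n \<union> (\<lambda>js. js @ [Suc n]) ` incr_tuples l n"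
    proof (cases "Suc n \<in> set js")
      case False
      have "set js \<subseteq> {1..n}"
      proof
        fix x assume "x \<in> set js"
        moreover have "set js \<subseteq> {1..Suc n}" using js unfolding incr_tuples_def by auto
        ultimately show "x \<in> {1..n}" using False by (auto simp: subset_iff) (metis le_Suc_eq)
      qed
      then show ?thesis using js unfolding incr_tuples_def by auto
    next
      case True
      from js have "js \<noteq> []" unfolding incr_tuples_def by auto
      then obtain ys y where e: "js = ys @ [y]" using rev_exhaust by blast
      have st: "sorted_wrt (<) ys" "\<forall>x\<in>set ys. x < y" "y \<le> Suc n" "set ys \<subseteq> {1..Suc n}"
        using js e unfolding incr_tuples_def by (auto simp: sorted_wrt_append)
      have "y = Suc n" using True st e by auto
      hence "ys \<in> incr_tuples l n" using st js e unfolding incr_tuples_def by fastforce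
      then show ?thesis using e \<open>y = Suc n\<close> by auto
    qed
  qed
next
  show "incr_tuples (Suc l) n \<union> (\<lambda>js. js @ [Suc n]) ` incr_tuples l n \<subseteq> incr_tuples (Suc l) (Suc n)"
    unfolding incr_tuples_def by (auto simp: sorted_wrt_append subset_iff less_Suc_eq_le)
qed

lemma comp_split:
  "compositions (Suc l) m = (\<lambda>(k,d). d @ [k]) ` (SIGMA k:{1..m}. compositions l (m - k))"
proof
  show "compositions (Suc l) m \<subseteq> (\<lambda>(k,d). d @ [k]) ` (SIGMA k:{1..m}. compositions l (m - k))"
  proof
    fix d assume d: "d \<in> compositions (Suc l) m"
    hence "d \<noteq> []" unfolding compositions_def by auto
    then obtain ys y where e: "d = ys @ [y]" using rev_exhaust by blast
    have "y \<in> {1..m}" "ys \<in> compositions l (m - y)"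
      using d e unfolding compositions_def by auto
    thus "d \<in> (\<lambda>(k,d). d @ [k]) ` (SIGMA k:{1..m}. compositions l (m - k))"
      using e by force
  qed
next
  show "(\<lambda>(k,d). d @ [k]) ` (SIGMA k:{1..m}. compositions l (m - k)) \<subseteq> compositions (Suc l) m"
    unfolding compositions_def by auto
qed

lemma comp_inj: "inj_on (\<lambda>(k,d). d @ [k]) A"
  by (auto simp: inj_on_def)

lemma W_rec:
  "W lam (Suc l) (Suc n) m = W lam (Suc l) n m
     + (\<Sum>k=1..m. lam (Suc n) ^ k * W lam l n (m - k))"
proof -
  let ?I1 = "incr_tuples (Suc l) n" and ?I0 = "incr_tuples l n"
  let ?F = "\<lambda>d js. \<Prod>i<Suc l. lam (js ! i) ^ (d ! i)"
  have disj: "?I1 \<inter> (\<lambda>js. js @ [Suc n]) ` ?I0 = {}"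
    unfolding incr_tuples_def by auto
  have injs: "inj_on (\<lambda>js. js @ [Suc n]) ?I0" by (auto simp: inj_on_def)
  have "W lam (Suc l) (Suc n) m =
     (\<Sum>d \<in> compositions (Suc l) m. (\<Sum>js\<in>?I1. ?F d js) + (\<Sum>js\<in>?I0. ?F d (js @ [Suc n])))"
    unfolding W_def incr_split
    by (simp add: sum.union_disjoint[OF fin_incr finite_imageI[OF fin_incr] disj] sum.reindex[OF injs])
  also have "\<dots> = W lam (Suc l) n m + (\<Sum>d \<in> compositions (Suc l) m. \<Sum>js\<in>?I0. ?F d (js @ [Suc n]))"
    unfolding W_def sum.distrib by simp
  also have "(\<Sum>d \<in> compositions (Suc l) m. \<Sum>js\<in>?I0. ?F d (js @ [Suc n]))
     = (\<Sum>(k,d) \<in> (SIGMA k:{1..m}. compositions l (m - k)). \<Sum>js\<in>?I0. ?F (d @ [k]) (js @ [Suc n]))"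
    unfolding comp_split by (subst sum.reindex[OF comp_inj]) (simp add: case_prod_beta)
  also have "\<dots> = (\<Sum>k=1..m. \<Sum>d\<in>compositions l (m - k). \<Sum>js\<in>?I0. ?F (d @ [k]) (js @ [Suc n]))"
    by (subst sum.Sigma[symmetric]) (auto simp: fin_comp)
  also have "\<dots> = (\<Sum>k=1..m. lam (Suc n) ^ k * W lam l n (m - k))"
  proof (rule sum.cong[OF refl])
    fix k assume "k \<in> {1..m}"
    have "(\<Sum>d\<in>compositions l (m - k). \<Sum>js\<in>?I0. ?F (d @ [k]) (js @ [Suc n]))
      = (\<Sum>d\<in>compositions l (m - k). \<Sum>js\<in>?I0. lam (Suc n) ^ k * (\<Prod>i<l. lam (js ! i) ^ (d ! i)))"
    proof (intro sum.cong refl)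
      fix d js assume d: "d \<in> compositions l (m - k)" and js: "js \<in> ?I0"
      have ld: "length d = l" using d unfolding compositions_def by auto
      have lj: "length js = l" using js unfolding incr_tuples_def by auto
      have "(\<Prod>i<l. lam ((js @ [Suc n]) ! i) ^ ((d @ [k]) ! i)) = (\<Prod>i<l. lam (js ! i) ^ (d ! i))"
        by (rule prod.cong) (auto simp: nth_append ld lj)
      thus "?F (d @ [k]) (js @ [Suc n]) = lam (Suc n) ^ k * (\<Prod>i<l. lam (js ! i) ^ (d ! i))"
        by (simp add: ld lj nth_append)
    qed
    also have "\<dots> = lam (Suc n) ^ k * W lam l n (m - k)"
      unfolding W_def by (simp add: sum_distrib_left)
    finally show "(\<Sum>d\<in>compositions l (m - k). \<Sum>js\<in>?I0. ?F (d @ [k]) (js @ [Suc n]))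
      = lam (Suc n) ^ k * W lam l n (m - k)" .
  qed
  finally show ?thesis .
qed

definition G :: "(nat \<Rightarrow> 'a::field) \<Rightarrow> 'a \<Rightarrow> nat \<Rightarrow> nat \<Rightarrow> 'a" where
  "G lam t n m = (\<Sum>l\<le>n. (1 - t) ^ l * W lam l n m)"

lemma G_rec:
  "G lam t (Suc n) m = G lam t n m + (1 - t) * (\<Sum>k=1..m. lam (Suc n) ^ k * G lam t n (m - k))"
proof -
  have "G lam t (Suc n) m = W lam 0 (Suc n) m + (\<Sum>l\<le>n. (1 - t) ^ Suc l * W lam (Suc l) (Suc n) m)"
    unfolding G_def by (subst sum.atMost_Suc_shift) simp
  also have "\<dots> = W lam 0 (Suc n) m + (\<Sum>l\<le>n. (1 - t) ^ Suc l * W lam (Suc l) n m)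
      + (\<Sum>l\<le>n. (1 - t) ^ Suc l * (\<Sum>k=1..m. lam (Suc n) ^ k * W lam l n (m - k)))"
    by (simp add: W_rec distrib_left sum.distrib)
  also have "W lam 0 (Suc n) m + (\<Sum>l\<le>n. (1 - t) ^ Suc l * W lam (Suc l) n m) = G lam t n m"
  proof -
    have "G lam t n m = (\<Sum>l\<le>Suc n. (1 - t) ^ l * W lam l n m)"
      unfolding G_def by (simp add: W_big)
    also have "\<dots> = W lam 0 n m + (\<Sum>l\<le>n. (1 - t) ^ Suc l * W lam (Suc l) n m)"
      by (subst sum.atMost_Suc_shift) simp
    finally show ?thesis by (simp add: W0)
  qed
  also have "(\<Sum>l\<le>n. (1 - t) ^ Suc l * (\<Sum>k=1..m. lam (Suc n) ^ k * W lam l n (m - k)))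
     = (1 - t) * (\<Sum>k=1..m. lam (Suc n) ^ k * G lam t n (m - k))"
    unfolding G_def
    by (simp add: sum_distrib_left mult_ac sum.swap[of _ "{..n}"])
  finally show ?thesis .
qed

lemma tele: "(\<Sum>k=1..j. (u::'a::field) ^ k * (1 - u)) = u - u ^ Suc j"
  by (induction j) (auto simp: algebra_simps)

lemma G_closed:
  "G (\<lambda>i. t ^ (i - 1)) t n m = (if m = 0 then 1 else 1 - t ^ n)"
proof (induction n arbitrary: m)
  case 0
  show ?case unfolding G_def by (simp add: W0)
next
  case (Suc n)
  show ?case
  proof (cases m)
    case 0
    then show ?thesis using Suc.IH by (simp add: G_rec)
  next
    case (Suc j)
    let ?u = "t ^ n"
    have "(\<Sum>k=1..Suc j. (t ^ (Suc n - 1)) ^ k * G (\<lambda>i. t ^ (i - 1)) t n (Suc j - k))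
        = (\<Sum>k=1..Suc j. ?u ^ k * (if Suc j - k = 0 then 1 else 1 - ?u))"
      by (rule sum.cong[OF refl]) (simp only: Suc.IH, simp add: power_mult)
    also have "\<dots> = (\<Sum>k=1..j. ?u ^ k * (1 - ?u)) + ?u ^ Suc j"
      by (simp add: sum.atLeast1_atMost_eq)
    also have "\<dots> = ?u" using tele[of ?u j] by simp
    finally have e: "(\<Sum>k=1..Suc j. (t ^ (Suc n - 1)) ^ k * G (\<lambda>i. t ^ (i - 1)) t n (Suc j - k)) = ?u" .
    have "G (\<lambda>i. t ^ (i - 1)) t (Suc n) m = G (\<lambda>i. t ^ (i - 1)) t n m + (1 - t) * ?u"
      using G_rec[of "\<lambda>i. t ^ (i - 1)" t n m] e Suc by simp
    also have "\<dots> = 1 - t ^ Suc n" using Suc.IH[of m] Suc by (simp add: algebra_simps)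
    finally show ?thesis using Suc by simp
  qed
qed

theorem lemma4p4:
  fixes q :: "'a::field" and m n :: nat
  assumes "q \<noteq> 0" and "q ^ 2 \<noteq> 1"
  shows "theta (inverse q ^ 2) m n (\<lambda>i. inverse q ^ (2 * (i - 1))) = qhat q n"
proof -
  let ?t = "inverse q ^ 2"
  have lam: "(\<lambda>i. inverse q ^ (2 * (i - 1))) = (\<lambda>i. ?t ^ (i - 1))"
    by (simp add: power_mult)
  have t1: "1 - ?t \<noteq> 0" using assms by (simp add: power_inverse)
  have qh: "qhat q n = (1 - ?t ^ n) / (1 - ?t)"
    unfolding qhat_def by (simp add: power_mult)
  show ?thesis
  proof (cases "m = 0")
    case True
    then show ?thesis unfolding theta_def qh by simp
  next
    case False
    let ?lam = "\<lambda>i. ?t ^ (i - 1)"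
    have th: "theta ?t m n ?lam = (\<Sum>l=1..n. (1 - ?t) ^ (l - 1) * W ?lam l n m)"
      unfolding theta_def W_def using False by simp
    have "(1 - ?t) * (\<Sum>l=1..n. (1 - ?t) ^ (l - 1) * W ?lam l n m)
        = (\<Sum>l=1..n. (1 - ?t) ^ l * W ?lam l n m)"
      unfolding sum_distrib_left
      by (rule sum.cong) (auto simp: power_eq_if)
    also have "\<dots> = G ?lam ?t n m"
    proof -
      have "G ?lam ?t n m = (\<Sum>l\<in>insert 0 {1..n}. (1 - ?t) ^ l * W ?lam l n m)"
        unfolding G_def by (rule sum.cong) auto
      thus ?thesis using False by (simp add: W0)
    qed
    also have "\<dots> = 1 - ?t ^ n" using False G_closed[of ?t n m] by simp
    finally have "theta ?t m n ?lam * (1 - ?t) = 1 - ?t ^ n" using th by (simp add: mult.commute)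
    hence "theta ?t m n ?lam = (1 - ?t ^ n) / (1 - ?t)" using t1 by (simp add: eq_divide_eq)
    thus ?thesis unfolding lam qh .
  qed
qed

end
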